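(* Consider Algorithm AUX with parameter $t_0$ on an instance satisfying the standing assumption, with an edge labeling as in the context. For any two distinct offline vertices $u,v$ and every $t\in[0,1]$, we have $g_{u,v}(t)\le g(t)$.
   Context: **Model.** Poisson arrival model. Each online type $i$ independently arrives according to a Poisson process of rate $\lambda_i$ on $[0,1]$. On arrival, a vertex is immediately and irrevocably matched to an unmatched offline neighbor or discarded. Each offline vertex is matched at most once. The instance is a bipartite graph $(I,J,E)$ with rates $\lambda_i>0$. **Standing assumption.** There are values $x_{ij}\ge0$ (an optimal Jaillet–Lu LP solution) with $\sum_i x_{ij}=1$ for all $j$, and each type is one of two kinds: - first-class: one neighbor $j$, with $x_{ij}=\lambda_i$; - second-class: two neighbors $j_1,j_2$, with $x_{ij_1}=x_{ij_2}=\lambda_i/2$. **Labeling.** Each edge is labeled first-class or second-class. Edges of first-class types are labeled first-class. For every $j$, the first-class-labeled edges at $j$ have total $x$-value $1-\ln2$. **Reference process.** $H$ has offline vertices $a,b$; a type of rate $2\ln2$ adjacent to both; and types of rate $1-\ln2$ adjacent only to $a$, resp. only to $b$. Algorithm RES with parameter $t_0$ works as follows: - single-neighbor arrivals are matched if their neighbor is unmatched; - a two-neighbor arrival at time $t>t_0$ with an unmatched neighbor is matched to a uniformly random unmatched neighbor. On $H$ under RES, $f(t)$ is the probability that a given offline vertex is matched by time $t$, $g(t)$ the probability both are, and $\bar g=1-g$. **Algorithm AUX (parameter $t_0$).** Under AUX: - $f_u(t)$ is the probability that offline $u$ is matched by time $t$, and $\bar f_u=1-f_u$; - $g_{u,v}(t)$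 is the probability that both $u$ and $v$ are matched by time $t$; - $g'_{u,v}(t)$ is the probability that both are unmatched at time $t$. Edges are used only if their offline endpoint is unmatched. - A first-class arrival is matched to its neighbor if possible. - A second-class arrival of type $i$ with neighbors $u,v$ chooses at most one edge, with disjoint probabilities: - each first-class-labeled edge $(i,u)$ with probability $1/2$; - if the arrival time is $t>t_0$, each second-class-labeled edge $(i,u)$ with probability $\frac12\min\{\bar g(t)/(2\bar f_u(t)-g'_{u,v}(t)),1\}$ if $v$ is unmatched, or $\min\{\bar g(t)/(2\bar f_u(t)-g'_{u,v}(t)),1\}$ if $v$ is matched. *)

theory Defs
  imports "HOL-Analysis.Analysis"
begin

text \<open>A state is the set S of matched offline
vertices. rate t S u is the instantaneous rate (at time t, in state S) at which the
unmatched offline vertex u becomes matched. The law p t S = Pr[matched set at time t = S]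
of such a (Poisson-driven) process is characterised by the Kolmogorov forward equation,
written in integral form because the rates jump at t0.\<close>

definition ctmc_law :: "'j set \<Rightarrow> (real \<Rightarrow> 'j set \<Rightarrow> 'j \<Rightarrow> real)
    \<Rightarrow> (real \<Rightarrow> 'j set \<Rightarrow> real) \<Rightarrow> bool" where
  "ctmc_law J rate p \<longleftrightarrow>
     (\<forall>S. S \<subseteq> J \<longrightarrow> p 0 S = (if S = {} then 1 else 0)) \<and>
     (\<forall>t\<in>{0..1}. \<forall>S. S \<subseteq> J \<longrightarrow>
        ((\<lambda>s. (\<Sum>u\<in>S. p s (S - {u}) * rate s (S - {u}) u)
              - p s S * (\<Sum>u\<in>J - S. rate s S u))
         has_integral (p t S - p 0 S)) {0..t})"

text \<open>Reference process H (offline vertices True = a, False = b) under RES.\<close>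

definition res_rate :: "real \<Rightarrow> real \<Rightarrow> bool set \<Rightarrow> bool \<Rightarrow> real" where
  "res_rate t0 t S u =
     (1 - ln 2) + (if t > t0 then 2 * ln 2 * (1 / real (card (UNIV - S))) else 0)"

definition fH :: "(real \<Rightarrow> bool set \<Rightarrow> real) \<Rightarrow> real \<Rightarrow> real" where
  "fH q t = (\<Sum>S\<in>{S. True \<in> S}. q t S)"

definition gH :: "(real \<Rightarrow> bool set \<Rightarrow> real) \<Rightarrow> real \<Rightarrow> real" where
  "gH q t = q t UNIV"

definition fA :: "'j set \<Rightarrow> (real \<Rightarrow> 'j set \<Rightarrow> real) \<Rightarrow> real \<Rightarrow> 'j \<Rightarrow> real" where
  "fA J p t u = (\<Sum>S\<in>{S. S \<subseteq> J \<and> u \<in> S}. p t S)"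

definition gA :: "'j set \<Rightarrow> (real \<Rightarrow> 'j set \<Rightarrow> real) \<Rightarrow> real \<Rightarrow> 'j \<Rightarrow> 'j \<Rightarrow> real" where
  "gA J p t u v = (\<Sum>S\<in>{S. S \<subseteq> J \<and> u \<in> S \<and> v \<in> S}. p t S)"

definition gA' :: "'j set \<Rightarrow> (real \<Rightarrow> 'j set \<Rightarrow> real) \<Rightarrow> real \<Rightarrow> 'j \<Rightarrow> 'j \<Rightarrow> real" where
  "gA' J p t u v = (\<Sum>S\<in>{S. S \<subseteq> J \<and> u \<notin> S \<and> v \<notin> S}. p t S)"

text \<open>Probability that an arrival of type i at time t in state S (with u unmatched)
chooses the edge (i,u). lab i u: edge (i,u) is labeled first-class.
gbar is the function 1 - g of the reference process.\<close>

definition aux_choice :: "'j set \<Rightarrow> ('i \<Rightarrow> 'j set) \<Rightarrow> ('i \<Rightarrow> 'j \<Rightarrow> bool) \<Rightarrow> real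
    \<Rightarrow> (real \<Rightarrow> real) \<Rightarrow> (real \<Rightarrow> 'j set \<Rightarrow> real) \<Rightarrow> real \<Rightarrow> 'j set \<Rightarrow> 'i \<Rightarrow> 'j \<Rightarrow> real" where
  "aux_choice J N lab t0 gbar p t S i u =
     (if card (N i) = 1 then 1
      else (let v = the_elem (N i - {u}) in
        if lab i u then 1 / 2
        else if t > t0 then
          (if v \<notin> S then 1 / 2 else 1) *
            min (gbar t / (2 * (1 - fA J p t u) - gA' J p t u v)) 1
        else 0))"

definition aux_rate :: "'i set \<Rightarrow> 'j set \<Rightarrow> ('i \<Rightarrow> 'j set) \<Rightarrow> ('i \<Rightarrow> real) \<Rightarrow> ('i \<Rightarrow> 'j \<Rightarrow> bool)
    \<Rightarrow> real \<Rightarrow> (real \<Rightarrow> real) \<Rightarrow> (real \<Rightarrow> 'j set \<Rightarrow> real) \<Rightarrow> real \<Rightarrow> 'j set \<Rightarrow> 'j \<Rightarrow> real" where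
  "aux_rate I J N lam lab t0 gbar p t S u =
     (\<Sum>i\<in>{i\<in>I. u \<in> N i}. lam i * aux_choice J N lab t0 gbar p t S i u)"

end

theory Submission
  imports Defs
begin


lemma cmp_lemma:
  fixes D h :: "real \<Rightarrow> real"
  assumes I: "\<And>t. t \<in> {0..1} \<Longrightarrow> (h has_integral (D t - D 0)) {0..t}"
    and D0: "D 0 \<ge> 0"
    and pos: "\<And>s. s \<in> {0..1} \<Longrightarrow> D s < 0 \<Longrightarrow> h s \<ge> 0"
    and t: "t \<in> {0..1}"
  shows "D t \<ge> 0"
proof (rule ccontr)
  assume "\<not> D t \<ge> 0" hence neg: "D t < 0" by simp
  have hint: "h integrable_on {0..1}" using I[of 1] by auto
  have Deq: "\<And>x. x\<in>{0..1} \<Longrightarrow> D x = D 0 + integral {0..x} h"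
  proof -
    fix x :: real assume "x \<in> {0..1}"
    then have "integral {0..x} h = D x - D 0" by (intro integral_unique I)
    then show "D x = D 0 + integral {0..x} h" by simp
  qed
  have cont: "continuous_on {0..1} D"
  proof -
    have "continuous_on {0..1} (\<lambda>x. D 0 + integral {0..x} h)"
      by (intro continuous_intros indefinite_integral_continuous_1 hint)
    then show ?thesis using Deq by (metis (no_types, lifting) continuous_on_cong)
  qed
  define Z where "Z = {0..t} \<inter> D -` {0..}"
  have "closed Z" unfolding Z_def
    by (rule continuous_closed_preimage) (use cont t in \<open>auto intro: continuous_on_subset\<close>)
  moreover have "bounded Z" unfolding Z_def by (meson bounded_Int bounded_closed_interval)
  ultimately have "compact Z" using compact_eq_bounded_closed by blast
  moreover have "0 \<in> Z" using D0 t by (auto simp: Z_def)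
  ultimately obtain m where m: "m \<in> Z" "\<forall>y\<in>Z. y \<le> m"
    using compact_attains_sup by blast
  have m0: "0 \<le> m" "m \<le> t" "D m \<ge> 0" using m by (auto simp: Z_def)
  have "m \<noteq> t" using m0 neg by auto
  hence mt: "m < t" using m0 by simp
  have le: "D s \<le> D t" if s: "m < s" "s \<le> t" for s
  proof -
    have s01: "s \<in> {0..1}" using s m0 t by auto
    have hint_t: "h integrable_on {0..t}" using I t by auto
    have comb: "integral {0..s} h + integral {s..t} h = integral {0..t} h"
      by (rule Henstock_Kurzweil_Integration.integral_combine) (use s m0 hint_t in auto)
    have "0 \<le> integral {s..t} h"
    proof (rule Henstock_Kurzweil_Integration.integral_nonneg)
      show "h integrable_on {s..t}" using hint_t s m0 integrable_subinterval_real by fastforce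
      fix x assume x: "x \<in> {s..t}"
      have "x \<in> {0..t}" using x s m0 by auto
      moreover have "\<not> x \<le> m" using x s by auto
      ultimately have "D x < 0" using m(2) unfolding Z_def by force
      then show "0 \<le> h x" using pos x s m0 t by auto
    qed
    then show ?thesis using comb Deq[OF s01] Deq[OF t] by linarith
  qed
  have "m \<in> {0..1}" using m0 t by auto
  then obtain d where d: "d > 0" "\<forall>x'\<in>{0..1}. dist x' m < d \<longrightarrow> dist (D x') (D m) < - D t"
    using cont neg unfolding continuous_on_iff by (metis neg_0_less_iff_less)
  define s where "s = min (m + d/2) t"
  have s: "m < s" "s \<le> t" "s \<in> {0..1}" "dist s m < d" using d mt m0 t by (auto simp: s_def dist_real_def)
  then have "dist (D s) (D m) < - D t" using d by auto
  moreover have "D s \<le> D t" using le s by auto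
  ultimately show False using m0 by (auto simp: dist_real_def)
qed




lemma gen_identity:
  fixes P :: "'j set \<Rightarrow> real" and R :: "'j set \<Rightarrow> 'j \<Rightarrow> real" and \<phi> :: "'j set \<Rightarrow> real"
  assumes fin: "finite J"
  shows "(\<Sum>S\<in>Pow J. \<phi> S * ((\<Sum>w\<in>S. P (S - {w}) * R (S - {w}) w) - P S * (\<Sum>w\<in>J - S. R S w)))
       = (\<Sum>T\<in>Pow J. P T * (\<Sum>w\<in>J - T. R T w * (\<phi> (insert w T) - \<phi> T)))"
proof -
  have finP: "finite (Pow J)" using fin by simp
  have fin2: "\<And>S. S \<in> Pow J \<Longrightarrow> finite S" using fin finite_subset by auto
  have A: "(\<Sum>S\<in>Pow J. \<phi> S * (\<Sum>w\<in>S. P (S - {w}) * R (S - {w}) w))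
      = (\<Sum>(S,w)\<in>Sigma (Pow J) (\<lambda>S. S). \<phi> S * (P (S - {w}) * R (S - {w}) w))"
    by (subst sum.Sigma[symmetric]) (auto simp: finP fin2 sum_distrib_left)
  also have "\<dots> = (\<Sum>(T,w)\<in>Sigma (Pow J) (\<lambda>T. J - T). \<phi> (insert w T) * (P T * R T w))"
    by (rule sum.reindex_bij_witness[where i="\<lambda>(T,w). (insert w T, w)" and j="\<lambda>(S,w). (S - {w}, w)"])
       (auto simp: insert_absorb)
  also have "\<dots> = (\<Sum>T\<in>Pow J. \<Sum>w\<in>J - T. \<phi> (insert w T) * (P T * R T w))"
    by (subst sum.Sigma[symmetric]) (auto simp: finP fin)
  finally have A' : "(\<Sum>S\<in>Pow J. \<phi> S * (\<Sum>w\<in>S. P (S - {w}) * R (S - {w}) w))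
     = (\<Sum>T\<in>Pow J. \<Sum>w\<in>J - T. \<phi> (insert w T) * (P T * R T w))" .
  have "(\<Sum>S\<in>Pow J. \<phi> S * ((\<Sum>w\<in>S. P (S - {w}) * R (S - {w}) w) - P S * (\<Sum>w\<in>J - S. R S w)))
     = (\<Sum>S\<in>Pow J. \<phi> S * (\<Sum>w\<in>S. P (S - {w}) * R (S - {w}) w)) - (\<Sum>S\<in>Pow J. \<phi> S * (P S * (\<Sum>w\<in>J - S. R S w)))"
    by (simp add: right_diff_distrib sum_subtractf)
  also have "\<dots> = (\<Sum>T\<in>Pow J. (\<Sum>w\<in>J - T. \<phi> (insert w T) * (P T * R T w)) - \<phi> T * (P T * (\<Sum>w\<in>J - T. R T w)))"
    unfolding A' by (simp add: sum_subtractf)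
  also have "\<dots> = (\<Sum>T\<in>Pow J. P T * (\<Sum>w\<in>J - T. R T w * (\<phi> (insert w T) - \<phi> T)))"
    by (rule sum.cong) (auto simp: sum_distrib_left sum_subtractf[symmetric] algebra_simps intro!: sum.cong)
  finally show ?thesis .
qed

lemma agg_law:
  fixes rate :: "real \<Rightarrow> 'j set \<Rightarrow> 'j \<Rightarrow> real" and p :: "real \<Rightarrow> 'j set \<Rightarrow> real"
  assumes law: "ctmc_law J rate p" and fin: "finite J" and t: "t \<in> {0..1}"
  shows "((\<lambda>s. \<Sum>T\<in>Pow J. p s T * (\<Sum>w\<in>J - T. rate s T w * (\<phi> (insert w T) - \<phi> T)))
          has_integral ((\<Sum>S\<in>Pow J. \<phi> S * p t S) - (\<Sum>S\<in>Pow J. \<phi> S * p 0 S))) {0..t}"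
proof -
  have each: "\<And>S. S \<in> Pow J \<Longrightarrow> ((\<lambda>s. \<phi> S * ((\<Sum>u\<in>S. p s (S - {u}) * rate s (S - {u}) u)
              - p s S * (\<Sum>u\<in>J - S. rate s S u))) has_integral (\<phi> S * (p t S - p 0 S))) {0..t}"
  proof -
    fix S assume "S \<in> Pow J"
    then have "S \<subseteq> J" by simp
    with law t have "((\<lambda>s. (\<Sum>u\<in>S. p s (S - {u}) * rate s (S - {u}) u)
              - p s S * (\<Sum>u\<in>J - S. rate s S u)) has_integral (p t S - p 0 S)) {0..t}"
      unfolding ctmc_law_def by blast
    then show "?thesis S" by (rule has_integral_mult_right)
  qed
  have "((\<lambda>s. \<Sum>S\<in>Pow J. \<phi> S * ((\<Sum>u\<in>S. p s (S - {u}) * rate s (S - {u}) u)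
              - p s S * (\<Sum>u\<in>J - S. rate s S u))) has_integral (\<Sum>S\<in>Pow J. \<phi> S * (p t S - p 0 S))) {0..t}"
    by (rule has_integral_sum) (use fin each in auto)
  moreover have "(\<Sum>S\<in>Pow J. \<phi> S * (p t S - p 0 S)) = (\<Sum>S\<in>Pow J. \<phi> S * p t S) - (\<Sum>S\<in>Pow J. \<phi> S * p 0 S)"
    by (simp add: right_diff_distrib sum_subtractf)
  ultimately show ?thesis
    by (simp only: gen_identity[OF fin])
qed




lemma H_raw:
  assumes H: "ctmc_law UNIV (res_rate t0) q" and t: "t \<in> {0..1}"
  defines "\<rho> \<equiv> \<lambda>s::real. (1 - ln 2) + (if s > t0 then ln 2 else 0)"
    and "r \<equiv> \<lambda>s::real. (1 - ln 2) + (if s > t0 then 2 * ln 2 else 0)"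
  shows "((\<lambda>s. - (2 * \<rho> s * q s {})) has_integral (q t {} - 1)) {0..t}"
    and "((\<lambda>s. \<rho> s * q s {} - r s * q s {True}) has_integral (q t {True})) {0..t}"
    and "((\<lambda>s. \<rho> s * q s {} - r s * q s {False}) has_integral (q t {False})) {0..t}"
    and "((\<lambda>s. r s * q s {True} + r s * q s {False}) has_integral (q t UNIV)) {0..t}"
proof -
  have law: "\<And>S. ((\<lambda>s. (\<Sum>u\<in>S. q s (S - {u}) * res_rate t0 s (S - {u}) u)
              - q s S * (\<Sum>u\<in>UNIV - S. res_rate t0 s S u)) has_integral (q t S - q 0 S)) {0..t}"
    using H t unfolding ctmc_law_def by blast
  have q0: "\<And>S. q 0 S = (if S = {} then 1 else 0)" using H unfolding ctmc_law_def by blast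
  have U1: "UNIV - {True} = {False}" "UNIV - {False} = {True}" by auto
  have rr: "\<And>s. res_rate t0 s {} u = \<rho> s" "\<And>s. res_rate t0 s {True} u = r s" "\<And>s. res_rate t0 s {False} u = r s" for u
    by (auto simp: res_rate_def \<rho>_def r_def U1)
  show "((\<lambda>s. - (2 * \<rho> s * q s {})) has_integral (q t {} - 1)) {0..t}"
    using law[of "{}"] by (simp add: q0 UNIV_bool rr mult_ac)
  show "((\<lambda>s. \<rho> s * q s {} - r s * q s {True}) has_integral (q t {True})) {0..t}"
    using law[of "{True}"] by (simp add: q0 U1 rr mult_ac)
  show "((\<lambda>s. \<rho> s * q s {} - r s * q s {False}) has_integral (q t {False})) {0..t}"
    using law[of "{False}"] by (simp add: q0 U1 rr mult_ac)
  have U2: "UNIV - {True, False} = {}" "{True, False} - {True} = {False}" "{True, False} - {False} = {True}" "{False, True} - {True} = {False}" "{False, True} - {False} = {True}" by auto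
  have "((\<lambda>s. q s {True} * r s + q s {False} * r s) has_integral (q t UNIV)) {0..t}"
    using law[of "UNIV"] by (simp add: q0 UNIV_bool rr U2)
  then show "((\<lambda>s. r s * q s {True} + r s * q s {False}) has_integral (q t UNIV)) {0..t}"
    by (simp add: mult.commute)
qed


lemma H_facts:
  assumes H: "ctmc_law UNIV (res_rate t0) q" and t: "t \<in> {0..1}"
  shows "q t {} + q t {True} + q t {False} + q t UNIV = 1" and "q t {} \<ge> 0" and "q t UNIV \<le> 1"
proof -
  define \<rho> :: "real \<Rightarrow> real" where "\<rho> \<equiv> \<lambda>s::real. (1 - ln 2) + (if s > t0 then ln 2 else 0)"
  define r :: "real \<Rightarrow> real" where "r \<equiv> \<lambda>s::real. (1 - ln 2) + (if s > t0 then 2 * ln 2 else 0)"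
  have raw1: "\<And>x. x \<in> {0..1} \<Longrightarrow> ((\<lambda>s. - (2 * \<rho> s * q s {})) has_integral (q x {} - 1)) {0..x}"
    unfolding \<rho>_def r_def by (rule H_raw(1)[OF H])
  have raw2: "\<And>x. x \<in> {0..1} \<Longrightarrow> ((\<lambda>s. \<rho> s * q s {} - r s * q s {True}) has_integral (q x {True})) {0..x}"
    unfolding \<rho>_def r_def by (rule H_raw(2)[OF H])
  have raw3: "\<And>x. x \<in> {0..1} \<Longrightarrow> ((\<lambda>s. \<rho> s * q s {} - r s * q s {False}) has_integral (q x {False})) {0..x}"
    unfolding \<rho>_def r_def by (rule H_raw(3)[OF H])
  have raw4: "\<And>x. x \<in> {0..1} \<Longrightarrow> ((\<lambda>s. r s * q s {True} + r s * q s {False}) has_integral (q x UNIV)) {0..x}"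
    unfolding \<rho>_def r_def by (rule H_raw(4)[OF H])
  note raw = raw1 raw2 raw3 raw4
  have l2: "0 < ln (2::real)" "ln (2::real) < 1" using ln_2_less_1 by auto
  have \<rho>p: "\<And>s. \<rho> s \<ge> 0" and rp: "\<And>s. r s \<ge> 0" using l2 by (auto simp: \<rho>_def r_def)
  have q0: "\<And>S. q 0 S = (if S = {} then 1 else 0)" using H unfolding ctmc_law_def by blast
  have tot: "q x {} + q x {True} + q x {False} + q x UNIV = 1" if x: "x \<in> {0..1}" for x
  proof -
    have "((\<lambda>s. - (2 * \<rho> s * q s {}) + (\<rho> s * q s {} - r s * q s {True}) + (\<rho> s * q s {} - r s * q s {False})
       + (r s * q s {True} + r s * q s {False})) has_integral (q x {} - 1 + q x {True} + q x {False} + q x UNIV)) {0..x}"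
      by (intro has_integral_add raw[OF x])
    moreover have "(\<lambda>s. - (2 * \<rho> s * q s {}) + (\<rho> s * q s {} - r s * q s {True}) + (\<rho> s * q s {} - r s * q s {False})
       + (r s * q s {True} + r s * q s {False})) = (\<lambda>s. 0)" by (rule ext) (simp add: algebra_simps)
    ultimately have "((\<lambda>s. 0) has_integral (q x {} - 1 + q x {True} + q x {False} + q x UNIV)) {0..x}" by simp
    then have "q x {} - 1 + q x {True} + q x {False} + q x UNIV = 0"
      using has_integral_0 has_integral_unique by blast
    then show ?thesis by simp
  qed
  show "q t {} + q t {True} + q t {False} + q t UNIV = 1" by (rule tot[OF t])
  have apos: "q x {} \<ge> 0" if x: "x \<in> {0..1}" for x
  proof (rule cmp_lemma[where D="\<lambda>s. q s {}" and h="\<lambda>s. - (2 * \<rho> s * q s {})"])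
    show "\<And>t. t \<in> {0..1} \<Longrightarrow> ((\<lambda>s. - (2 * \<rho> s * q s {})) has_integral q t {} - q 0 {}) {0..t}"
      using raw(1) q0 by simp
    show "0 \<le> q 0 {}" using q0 by simp
    show "\<And>s. s \<in> {0..1} \<Longrightarrow> q s {} < 0 \<Longrightarrow> 0 \<le> - (2 * \<rho> s * q s {})"
      using \<rho>p by (simp add: mult_nonneg_nonpos)
  qed (rule x)
  show "q t {} \<ge> 0" by (rule apos[OF t])
  have "0 \<le> 1 - q t UNIV"
  proof (rule cmp_lemma[where D="\<lambda>s. 1 - q s UNIV" and h="\<lambda>s. - (r s * q s {True} + r s * q s {False})"])
    show "\<And>t. t \<in> {0..1} \<Longrightarrow> ((\<lambda>s. - (r s * q s {True} + r s * q s {False})) has_integral (1 - q t UNIV) - (1 - q 0 UNIV)) {0..t}"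
      using has_integral_neg[OF raw(4)] q0 by simp
    show "0 \<le> 1 - q 0 UNIV" using q0 by simp
    fix s :: real assume s: "s \<in> {0..1}" and neg: "1 - q s UNIV < 0"
    have "- (r s * q s {True} + r s * q s {False}) = r s * (q s {} - (1 - q s UNIV))"
    proof -
      have e: "q s {True} + q s {False} = 1 - q s {} - q s UNIV" using tot[OF s] by linarith
      have "- (r s * q s {True} + r s * q s {False}) = - (r s * (q s {True} + q s {False}))" by (simp add: distrib_left)
      also have "\<dots> = r s * (q s {} - (1 - q s UNIV))" unfolding e by (simp add: algebra_simps)
      finally show ?thesis .
    qed
    also have "\<dots> \<ge> 0" using rp apos[OF s] neg by simp
    finally show "0 \<le> - (r s * q s {True} + r s * q s {False})" .
  qed (rule t)
  then show "q t UNIV \<le> 1" by simp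
qed




lemma split_sum:
  fixes I :: "'i set" and N :: "'i \<Rightarrow> 'j set" and x :: "'i \<Rightarrow> 'j \<Rightarrow> real" and lab :: "'i \<Rightarrow> 'j \<Rightarrow> bool"
  assumes finI: "finite I"
    and xs: "(\<Sum>i\<in>{i\<in>I. w \<in> N i}. x i w) = 1"
    and ls: "(\<Sum>i\<in>{i\<in>I. w \<in> N i \<and> lab i w}. x i w) = 1 - ln 2"
  shows "(\<Sum>i\<in>{i\<in>I. w \<in> N i}. if lab i w then x i w * A else x i w * B) = (1 - ln 2) * A + ln 2 * B"
proof -
  have fin: "finite {i\<in>I. w \<in> N i}" using finI by simp
  have s1: "{i\<in>I. w \<in> N i} \<inter> {i. lab i w} = {i\<in>I. w \<in> N i \<and> lab i w}" by auto
  have s2: "{i\<in>I. w \<in> N i} \<inter> - {i. lab i w} = {i\<in>I. w \<in> N i \<and> \<not> lab i w}" by auto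
  have tot: "(\<Sum>i\<in>{i\<in>I. w \<in> N i}. x i w) = (\<Sum>i\<in>{i\<in>I. w \<in> N i \<and> lab i w}. x i w) + (\<Sum>i\<in>{i\<in>I. w \<in> N i \<and> \<not> lab i w}. x i w)"
    using sum.If_cases[OF fin, of "\<lambda>i. lab i w" "\<lambda>i. x i w" "\<lambda>i. x i w"] s1 s2 by simp
  have nl: "(\<Sum>i\<in>{i\<in>I. w \<in> N i \<and> \<not> lab i w}. x i w) = ln 2" using tot xs ls by simp
  have "(\<Sum>i\<in>{i\<in>I. w \<in> N i}. if lab i w then x i w * A else x i w * B)
     = (\<Sum>i\<in>{i\<in>I. w \<in> N i \<and> lab i w}. x i w * A) + (\<Sum>i\<in>{i\<in>I. w \<in> N i \<and> \<not> lab i w}. x i w * B)"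
    using sum.If_cases[OF fin, of "\<lambda>i. lab i w" "\<lambda>i. x i w * A" "\<lambda>i. x i w * B"] s1 s2 by simp
  also have "\<dots> = (1 - ln 2) * A + ln 2 * B"
    by (simp add: sum_distrib_right[symmetric] ls nl)
  finally show ?thesis .
qed

lemma rate_le:
  fixes I :: "'i set" and J :: "'j set" and N :: "'i \<Rightarrow> 'j set"
    and lam :: "'i \<Rightarrow> real" and x :: "'i \<Rightarrow> 'j \<Rightarrow> real"
    and lab :: "'i \<Rightarrow> 'j \<Rightarrow> bool"
  assumes finI: "finite I"
    and lam_pos: "\<forall>i\<in>I. lam i > 0"
    and x_sum: "\<forall>j\<in>J. (\<Sum>i\<in>{i\<in>I. j \<in> N i}. x i j) = 1"
    and classes: "\<forall>i\<in>I. (card (N i) = 1 \<and> (\<forall>j\<in>N i. x i j = lam i))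
                        \<or> (card (N i) = 2 \<and> (\<forall>j\<in>N i. x i j = lam i / 2))"
    and lab_first: "\<forall>i\<in>I. card (N i) = 1 \<longrightarrow> (\<forall>j\<in>N i. lab i j)"
    and lab_sum: "\<forall>j\<in>J. (\<Sum>i\<in>{i\<in>I. j \<in> N i \<and> lab i j}. x i j) = 1 - ln 2"
    and w: "w \<in> J"
  shows "aux_rate I J N lam lab t0 gbar p s T w \<le> (1 - ln 2) + (if s > t0 then 2 * ln 2 else 0)"
proof -
  have "aux_rate I J N lam lab t0 gbar p s T w
     \<le> (\<Sum>i\<in>{i\<in>I. w \<in> N i}. if lab i w then x i w * 1 else x i w * (if s > t0 then 2 else 0))"
    unfolding aux_rate_def
  proof (rule sum_mono)
    fix i assume i: "i \<in> {i\<in>I. w \<in> N i}"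
    have lp: "lam i > 0" using lam_pos i by auto
    show "lam i * aux_choice J N lab t0 gbar p s T i w
        \<le> (if lab i w then x i w * 1 else x i w * (if s > t0 then 2 else 0))"
    proof (cases "card (N i) = 1")
      case True
      then show ?thesis using classes lab_first i by (auto simp: aux_choice_def)
    next
      case False
      then have c2: "card (N i) = 2" and xi: "x i w = lam i / 2" using classes i by auto
      show ?thesis
      proof (cases "lab i w")
        case True then show ?thesis using False xi by (simp add: aux_choice_def)
      next
        case nl: False
        show ?thesis
        proof (cases "s > t0")
          case st: True
          define M where "M = min (gbar s / (2 * (1 - fA J p s w) - gA' J p s w (the_elem (N i - {w})))) 1"
          define c :: real where "c = (if the_elem (N i - {w}) \<notin> T then 1 / 2 else 1)"
          have ch: "aux_choice J N lab t0 gbar p s T i w = c * M"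
            using False nl st by (simp add: aux_choice_def M_def c_def Let_def)
          have "c * M \<le> c * 1" using M_def c_def by (intro mult_left_mono) auto
          also have "\<dots> \<le> 1" by (simp add: c_def)
          finally have "c * M \<le> 1" .
          then have "lam i * (c * M) \<le> lam i * 1" using lp by (intro mult_left_mono) auto
          then show ?thesis using ch nl st xi by simp
        next
          case False
          then show ?thesis using \<open>card (N i) \<noteq> 1\<close> nl by (simp add: aux_choice_def)
        qed
      qed
    qed
  qed
  also have "\<dots> = (1 - ln 2) * 1 + ln 2 * (if s > t0 then 2 else 0)"
    by (rule split_sum) (use finI x_sum lab_sum w in auto)
  also have "\<dots> = (1 - ln 2) + (if s > t0 then 2 * ln 2 else 0)" by simp
  finally show ?thesis .
qed




lemma fA_if: "finite J \<Longrightarrow> fA J p s u = (\<Sum>T\<in>Pow J. if u \<in> T then p s T else 0)"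
  unfolding fA_def by (subst sum.inter_filter[symmetric]) (auto intro: sum.cong)

lemma gA_if: "finite J \<Longrightarrow> gA J p s u v = (\<Sum>T\<in>Pow J. if u \<in> T \<and> v \<in> T then p s T else 0)"
  unfolding gA_def by (subst sum.inter_filter[symmetric]) (auto intro: sum.cong)

lemma gA'_if: "finite J \<Longrightarrow> gA' J p s u v = (\<Sum>T\<in>Pow J. if u \<notin> T \<and> v \<notin> T then p s T else 0)"
  unfolding gA'_def by (subst sum.inter_filter[symmetric]) (auto intro: sum.cong)

lemma notin_sum: "finite J \<Longrightarrow> (\<Sum>T\<in>Pow J. p s T) = 1 \<Longrightarrow> (\<Sum>T\<in>Pow J. if u \<notin> T then p s T else 0) = 1 - fA J p s u"
proof -
  assume fin: "finite J" and tot: "(\<Sum>T\<in>Pow J. p s T) = 1"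
  have "(\<Sum>T\<in>Pow J. p s T) = (\<Sum>T\<in>Pow J. (if u \<in> T then p s T else 0) + (if u \<notin> T then p s T else 0))"
    by (rule sum.cong) auto
  then show ?thesis using tot by (simp add: sum.distrib fA_if[OF fin])
qed

lemma flux_f_le:
  fixes I :: "'i set" and J :: "'j set" and N :: "'i \<Rightarrow> 'j set"
    and lam :: "'i \<Rightarrow> real" and x :: "'i \<Rightarrow> 'j \<Rightarrow> real"
    and lab :: "'i \<Rightarrow> 'j \<Rightarrow> bool" and p :: "real \<Rightarrow> 'j set \<Rightarrow> real"
  assumes finI: "finite I" and finJ: "finite J"
    and lam_pos: "\<forall>i\<in>I. lam i > 0"
    and x_sum: "\<forall>j\<in>J. (\<Sum>i\<in>{i\<in>I. j \<in> N i}. x i j) = 1"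
    and classes: "\<forall>i\<in>I. (card (N i) = 1 \<and> (\<forall>j\<in>N i. x i j = lam i))
                        \<or> (card (N i) = 2 \<and> (\<forall>j\<in>N i. x i j = lam i / 2))"
    and lab_first: "\<forall>i\<in>I. card (N i) = 1 \<longrightarrow> (\<forall>j\<in>N i. lab i j)"
    and lab_sum: "\<forall>j\<in>J. (\<Sum>i\<in>{i\<in>I. j \<in> N i \<and> lab i j}. x i j) = 1 - ln 2"
    and u: "u \<in> J"
    and pnn: "\<And>T. T \<subseteq> J \<Longrightarrow> p s T \<ge> 0"
    and tot: "(\<Sum>T\<in>Pow J. p s T) = 1"
    and gnn: "gbar s \<ge> 0"
  shows "(\<Sum>T\<in>Pow J. p s T * (if u \<notin> T then aux_rate I J N lam lab t0 gbar p s T u else 0))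
     \<le> (1 - ln 2) * (1 - fA J p s u) + ln 2 * (if s > t0 then gbar s else 0)"
proof -
  define Iu where "Iu = {i\<in>I. u \<in> N i}"
  have finIu: "finite Iu" using finI by (simp add: Iu_def)
  define ch where "ch = (\<lambda>i T. aux_choice J N lab t0 gbar p s T i u)"
  have "(\<Sum>T\<in>Pow J. p s T * (if u \<notin> T then aux_rate I J N lam lab t0 gbar p s T u else 0))
      = (\<Sum>T\<in>Pow J. \<Sum>i\<in>Iu. lam i * (if u \<notin> T then p s T * ch i T else 0))"
    by (rule sum.cong) (auto simp: aux_rate_def Iu_def ch_def sum_distrib_left mult_ac)
  also have "\<dots> = (\<Sum>i\<in>Iu. lam i * (\<Sum>T\<in>Pow J. (if u \<notin> T then p s T * ch i T else 0)))"
    by (subst sum.swap) (simp add: sum_distrib_left)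
  also have "\<dots> \<le> (\<Sum>i\<in>Iu. if lab i u then x i u * (1 - fA J p s u) else x i u * (if s > t0 then gbar s else 0))"
  proof (rule sum_mono)
    fix i assume i: "i \<in> Iu"
    have lp: "lam i > 0" using lam_pos i by (auto simp: Iu_def)
    have one: "(\<Sum>T\<in>Pow J. (if u \<notin> T then p s T * c else 0)) = c * (1 - fA J p s u)" for c
    proof -
      have "(\<Sum>T\<in>Pow J. (if u \<notin> T then p s T * c else 0)) = c * (\<Sum>T\<in>Pow J. if u \<notin> T then p s T else 0)"
        by (subst sum_distrib_left) (rule sum.cong, auto)
      then show ?thesis using notin_sum[of J p s, OF finJ tot] by simp
    qed
    show "lam i * (\<Sum>T\<in>Pow J. (if u \<notin> T then p s T * ch i T else 0))
        \<le> (if lab i u then x i u * (1 - fA J p s u) else x i u * (if s > t0 then gbar s else 0))"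
    proof (cases "card (N i) = 1")
      case True
      then have ch1: "ch i T = 1" for T by (simp add: ch_def aux_choice_def)
      have xl: "x i u = lam i" "lab i u" using classes lab_first i True by (auto simp: Iu_def)
      have "(\<Sum>T\<in>Pow J. (if u \<notin> T then p s T * ch i T else 0)) = (\<Sum>T\<in>Pow J. (if u \<notin> T then p s T * 1 else 0))"
        by (simp only: ch1)
      then have "(\<Sum>T\<in>Pow J. (if u \<notin> T then p s T * ch i T else 0)) = 1 - fA J p s u"
        using one[of 1] by simp
      then show ?thesis using xl by simp
    next
      case False
      then have c2: "card (N i) = 2" and xi: "x i u = lam i / 2" using classes i by (auto simp: Iu_def)
      show ?thesis
      proof (cases "lab i u")
        case True
        then have chh: "ch i T = 1/2" for T using False by (simp add: ch_def aux_choice_def)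
        have "(\<Sum>T\<in>Pow J. (if u \<notin> T then p s T * ch i T else 0)) = (\<Sum>T\<in>Pow J. (if u \<notin> T then p s T * (1/2) else 0))"
          by (simp only: chh)
        then have "(\<Sum>T\<in>Pow J. (if u \<notin> T then p s T * ch i T else 0)) = (1/2) * (1 - fA J p s u)"
          using one[of "1/2"] by simp
        then have "lam i * (\<Sum>T\<in>Pow J. (if u \<notin> T then p s T * ch i T else 0)) = (lam i / 2) * (1 - fA J p s u)"
          by simp
        then have e: "lam i * (\<Sum>T\<in>Pow J. (if u \<notin> T then p s T * ch i T else 0)) = x i u * (1 - fA J p s u)"
          by (simp only: xi)
        show ?thesis unfolding if_P[OF True] using e by (rule eq_refl)
      next
        case nl: False
        show ?thesis
        proof (cases "s > t0")
          case st: True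
          define w where "w = the_elem (N i - {u})"
          define den where "den = 2 * (1 - fA J p s u) - gA' J p s u w"
          define M where "M = min (gbar s / den) 1"
          define c :: "'j set \<Rightarrow> real" where "c = (\<lambda>T. if w \<notin> T then 1 / 2 else 1)"
          have ch: "ch i T = c T * M" for T
            using False nl st by (simp add: ch_def aux_choice_def M_def c_def den_def w_def Let_def)
          define K where "K = (\<Sum>T\<in>Pow J. (if u \<notin> T then p s T * c T else 0))"
          have sumK: "(\<Sum>T\<in>Pow J. (if u \<notin> T then p s T * ch i T else 0)) = M * K"
            unfolding K_def ch by (subst sum_distrib_left) (rule sum.cong, auto simp: mult_ac)
          have "K = (\<Sum>T\<in>Pow J. (if u \<notin> T then p s T else 0) - (1/2) * (if u \<notin> T \<and> w \<notin> T then p s T else 0))"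
            unfolding K_def by (rule sum.cong) (auto simp: c_def)
          also have "\<dots> = (1 - fA J p s u) - (1/2) * gA' J p s u w"
            by (simp add: sum_subtractf sum_distrib_left[symmetric] sum_divide_distrib[symmetric] notin_sum[of J p s, OF finJ tot] gA'_if[OF finJ])
          finally have Kden: "den = 2 * K" by (simp add: den_def)
          have K0: "K \<ge> 0" unfolding K_def
            by (rule sum_nonneg) (auto simp: c_def intro!: mult_nonneg_nonneg pnn)
          have Md: "M * den \<le> gbar s"
          proof (cases "den > 0")
            case True
            then show ?thesis unfolding M_def
              by (cases "gbar s / den \<le> 1") (auto simp: min_def field_simps)
          next
            case False
            then have "den = 0" using Kden K0 by simp
            then show ?thesis using gnn by simp
          qed
          have "lam i * (M * K) = x i u * (M * den)" using xi Kden by simp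
          also have "\<dots> \<le> x i u * gbar s" using Md lp xi by (intro mult_left_mono) auto
          finally show ?thesis using sumK nl st by simp
        next
          case ns: False
          then have ch0: "ch i T = 0" for T using False nl by (simp add: ch_def aux_choice_def)
          have "(\<Sum>T\<in>Pow J. (if u \<notin> T then p s T * ch i T else 0)) = (\<Sum>T\<in>Pow J. (if u \<notin> T then p s T * 0 else 0))"
            by (simp only: ch0)
          then show ?thesis using nl ns by (simp cong: if_cong)
        qed
      qed
    qed
  qed
  also have "\<dots> = (1 - ln 2) * (1 - fA J p s u) + ln 2 * (if s > t0 then gbar s else 0)"
    unfolding Iu_def by (rule split_sum) (use finI x_sum lab_sum u in auto)
  finally show ?thesis .
qed




lemma inner_f:
  fixes R :: "'j \<Rightarrow> real"
  assumes fin: "finite J" and T: "T \<subseteq> J" and u: "u \<in> J"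
  shows "(\<Sum>w\<in>J - T. R w * ((\<lambda>S. if u \<in> S then 1 else 0) (insert w T) - (\<lambda>S. if u \<in> S then 1 else 0) T))
       = (if u \<notin> T then R u else 0)"
proof -
  have "(\<Sum>w\<in>J - T. R w * ((\<lambda>S. if u \<in> S then 1 else 0) (insert w T) - (\<lambda>S. if u \<in> S then 1 else 0) T))
      = (\<Sum>w\<in>J - T. if w = u then (if u \<notin> T then R u else 0) else 0)"
    by (rule sum.cong) auto
  also have "\<dots> = (if u \<notin> T then R u else 0)" using fin u by (simp add: sum.delta')
  finally show ?thesis .
qed

lemma inner_G:
  fixes R :: "'j \<Rightarrow> real"
  assumes fin: "finite J" and T: "T \<subseteq> J" and u: "u \<in> J" and v: "v \<in> J" and uv: "u \<noteq> v"
  shows "(\<Sum>w\<in>J - T. R w * ((\<lambda>S. if u \<in> S \<and> v \<in> S then 1 else 0) (insert w T) - (\<lambda>S. if u \<in> S \<and> v \<in> S then 1 else 0) T))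
       = (if u \<in> T \<and> v \<notin> T then R v else 0) + (if v \<in> T \<and> u \<notin> T then R u else 0)"
proof -
  have "(\<Sum>w\<in>J - T. R w * ((\<lambda>S. if u \<in> S \<and> v \<in> S then 1 else 0) (insert w T) - (\<lambda>S. if u \<in> S \<and> v \<in> S then 1 else 0) T))
      = (\<Sum>w\<in>J - T. (if w = v then (if u \<in> T \<and> v \<notin> T then R v else 0) else 0) + (if w = u then (if v \<in> T \<and> u \<notin> T then R u else 0) else 0))"
    by (rule sum.cong) (use uv in auto)
  also have "\<dots> = (if u \<in> T \<and> v \<notin> T then R v else 0) + (if v \<in> T \<and> u \<notin> T then R u else 0)"
    using fin u v by (simp add: sum.distrib sum.delta')
  finally show ?thesis .
qed

lemma hid: fixes b1 b2 c l t0 s :: real shows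
 "(1 - l + (if t0 < s then l else 0)) * (1 - b1 - b2 - c) + (1 - l + (if t0 < s then 2 * l else 0)) / 2 * (b1 + b2) =
     (1 - l) * (1 - ((b1 + b2) / 2 + c)) + l * (if t0 < s then 1 - c else 0)"
  by (cases "t0 < s") (simp_all add: field_simps)

lemma ind_sum:
  fixes p :: "'j set \<Rightarrow> real"
  shows "(\<Sum>S\<in>Pow J. (if P S then 1 else 0) * p S) = (\<Sum>S\<in>Pow J. if P S then p S else 0)"
  by (rule sum.cong) auto

lemma init_sum:
  assumes "finite J" "\<not> P {}"
  shows "(\<Sum>S\<in>Pow J. (if P S then 1 else 0) * (if S = {} then 1 else (0::real))) = 0"
  by (rule sum.neutral) (use assms in auto)




theorem lemma4p5:
  fixes I :: "'i set" and J :: "'j set" and N :: "'i \<Rightarrow> 'j set"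
    and lam :: "'i \<Rightarrow> real" and x :: "'i \<Rightarrow> 'j \<Rightarrow> real"
    and lab :: "'i \<Rightarrow> 'j \<Rightarrow> bool" and t0 :: real
    and q :: "real \<Rightarrow> bool set \<Rightarrow> real"
    and p :: "real \<Rightarrow> 'j set \<Rightarrow> real"
  assumes finI: "finite I" and finJ: "finite J"
    and nbrs: "\<forall>i\<in>I. N i \<subseteq> J"
    and lam_pos: "\<forall>i\<in>I. lam i > 0"
    and x_nonneg: "\<forall>i\<in>I. \<forall>j\<in>N i. x i j \<ge> 0"
    and x_sum: "\<forall>j\<in>J. (\<Sum>i\<in>{i\<in>I. j \<in> N i}. x i j) = 1"
    and classes: "\<forall>i\<in>I. (card (N i) = 1 \<and> (\<forall>j\<in>N i. x i j = lam i))
                        \<or> (card (N i) = 2 \<and> (\<forall>j\<in>N i. x i j = lam i / 2))"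
    and lab_first: "\<forall>i\<in>I. card (N i) = 1 \<longrightarrow> (\<forall>j\<in>N i. lab i j)"
    and lab_sum: "\<forall>j\<in>J. (\<Sum>i\<in>{i\<in>I. j \<in> N i \<and> lab i j}. x i j) = 1 - ln 2"
    and t0: "0 \<le> t0" "t0 \<le> 1"
    and H_law: "ctmc_law UNIV (res_rate t0) q"
    and AUX_law: "ctmc_law J (aux_rate I J N lam lab t0 (\<lambda>t. 1 - gH q t) p) p"
    and AUX_nonneg: "\<forall>t\<in>{0..1}. \<forall>S. S \<subseteq> J \<longrightarrow> p t S \<ge> 0"
  shows "\<forall>u\<in>J. \<forall>v\<in>J. u \<noteq> v \<longrightarrow> (\<forall>t\<in>{0..1}. gA J p t u v \<le> gH q t)"
proof (intro ballI impI)
  fix u v and t :: real assume u: "u \<in> J" and v: "v \<in> J" and uv: "u \<noteq> v" and t: "t \<in> {0..1}"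
  define gbar where "gbar = (\<lambda>t. 1 - gH q t)"
  define R where "R = aux_rate I J N lam lab t0 gbar p"
  define \<rho> :: "real \<Rightarrow> real" where "\<rho> \<equiv> \<lambda>s::real. (1 - ln 2) + (if s > t0 then ln 2 else 0)"
  define r :: "real \<Rightarrow> real" where "r \<equiv> \<lambda>s::real. (1 - ln 2) + (if s > t0 then 2 * ln 2 else 0)"
  have l2: "0 < ln (2::real)" "ln (2::real) < 1" using ln_2_less_1 by auto
  have rp: "\<And>s. r s \<ge> 0" using l2 by (auto simp: r_def)
  have law: "ctmc_law J R p" using AUX_law by (simp add: R_def gbar_def)
  have p0: "\<And>S. S \<subseteq> J \<Longrightarrow> p 0 S = (if S = {} then 1 else 0)" using law unfolding ctmc_law_def by blast
  have q0: "\<And>S. q 0 S = (if S = {} then 1 else 0)" using H_law unfolding ctmc_law_def by blast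
  have p0sum: "(\<Sum>S\<in>Pow J. f S * p 0 S) = (\<Sum>S\<in>Pow J. f S * (if S = {} then 1 else 0))" for f
    by (rule sum.cong) (auto simp: p0)
  have raw1: "\<And>x. x \<in> {0..1} \<Longrightarrow> ((\<lambda>s. - (2 * \<rho> s * q s {})) has_integral (q x {} - 1)) {0..x}"
    unfolding \<rho>_def r_def by (rule H_raw(1)[OF H_law])
  have raw2: "\<And>x. x \<in> {0..1} \<Longrightarrow> ((\<lambda>s. \<rho> s * q s {} - r s * q s {True}) has_integral (q x {True})) {0..x}"
    unfolding \<rho>_def r_def by (rule H_raw(2)[OF H_law])
  have raw3: "\<And>x. x \<in> {0..1} \<Longrightarrow> ((\<lambda>s. \<rho> s * q s {} - r s * q s {False}) has_integral (q x {False})) {0..x}"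
    unfolding \<rho>_def r_def by (rule H_raw(3)[OF H_law])
  have raw4: "\<And>x. x \<in> {0..1} \<Longrightarrow> ((\<lambda>s. r s * q s {True} + r s * q s {False}) has_integral (q x UNIV)) {0..x}"
    unfolding \<rho>_def r_def by (rule H_raw(4)[OF H_law])
  define F where "F = (\<lambda>s. (q s {True} + q s {False}) / 2 + q s UNIV)"
  define hF where "hF = (\<lambda>s. \<rho> s * q s {} + r s / 2 * (q s {True} + q s {False}))"
  have F_int: "(hF has_integral F x) {0..x}" if x: "x \<in> {0..1}" for x
  proof -
    have "((\<lambda>s. (1/2) * ((\<rho> s * q s {} - r s * q s {True}) + (\<rho> s * q s {} - r s * q s {False}))
            + (r s * q s {True} + r s * q s {False})) has_integral ((1/2) * (q x {True} + q x {False}) + q x UNIV)) {0..x}"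
      by (intro has_integral_add has_integral_mult_right raw2 raw3 raw4 x)
    moreover have "(\<lambda>s. (1/2) * ((\<rho> s * q s {} - r s * q s {True}) + (\<rho> s * q s {} - r s * q s {False}))
            + (r s * q s {True} + r s * q s {False})) = hF"
      by (rule ext) (simp add: hF_def algebra_simps)
    moreover have "(1/2) * (q x {True} + q x {False}) + q x UNIV = F x" by (simp add: F_def)
    ultimately show ?thesis by simp
  qed
  have F0: "F 0 = 0" by (simp add: F_def q0)
  have totp: "(\<Sum>T\<in>Pow J. p s T) = 1" if s: "s \<in> {0..1}" for s
  proof -
    have "((\<lambda>s. \<Sum>T\<in>Pow J. p s T * (\<Sum>w\<in>J - T. R s T w * ((\<lambda>_. 1) (insert w T) - (\<lambda>_. 1) T)))
          has_integral ((\<Sum>S\<in>Pow J. 1 * p s S) - (\<Sum>S\<in>Pow J. 1 * p 0 S))) {0..s}"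
      by (rule agg_law[OF law finJ s])
    then have "((\<lambda>s. 0) has_integral ((\<Sum>S\<in>Pow J. p s S) - (\<Sum>S\<in>Pow J. p 0 S))) {0..s}" by simp
    then have "(\<Sum>S\<in>Pow J. p s S) - (\<Sum>S\<in>Pow J. p 0 S) = 0"
      using has_integral_0 has_integral_unique by blast
    moreover have "(\<Sum>S\<in>Pow J. p 0 S) = 1"
      using p0sum[of "\<lambda>_. 1"] finJ by (simp add: sum.delta')
    ultimately show ?thesis by simp
  qed
  define hf where "hf = (\<lambda>w s. \<Sum>T\<in>Pow J. p s T * (if w \<notin> T then R s T w else 0))"
  have f_int: "(hf w has_integral fA J p x w) {0..x}" if w: "w \<in> J" and x: "x \<in> {0..1}" for w x
  proof -
    have "((\<lambda>s. \<Sum>T\<in>Pow J. p s T * (\<Sum>w'\<in>J - T. R s T w' * ((\<lambda>S. if w \<in> S then 1 else 0) (insert w' T) - (\<lambda>S. if w \<in> S then 1 else 0) T)))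
          has_integral ((\<Sum>S\<in>Pow J. (if w \<in> S then 1 else 0) * p x S) - (\<Sum>S\<in>Pow J. (if w \<in> S then 1 else 0) * p 0 S))) {0..x}"
      by (rule agg_law[OF law finJ x])
    moreover have "(\<lambda>s. \<Sum>T\<in>Pow J. p s T * (\<Sum>w'\<in>J - T. R s T w' * ((\<lambda>S. if w \<in> S then 1 else 0) (insert w' T) - (\<lambda>S. if w \<in> S then 1 else 0) T)))
        = hf w"
      unfolding hf_def
    proof (intro ext sum.cong refl)
      fix s T assume "T \<in> Pow J"
      then show "p s T * (\<Sum>w'\<in>J - T. R s T w' * ((\<lambda>S. if w \<in> S then 1 else 0) (insert w' T) - (\<lambda>S. if w \<in> S then 1 else 0) T))
          = p s T * (if w \<notin> T then R s T w else 0)"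
        using inner_f[OF finJ _ w, of T "R s T"] by simp
    qed
    moreover have "(\<Sum>S\<in>Pow J. (if w \<in> S then 1 else 0) * p x S) = fA J p x w"
      by (simp add: ind_sum fA_if[OF finJ])
    moreover have "(\<Sum>S\<in>Pow J. (if w \<in> S then 1 else 0) * p 0 S) = 0"
      unfolding p0sum by (rule init_sum[OF finJ]) simp
    ultimately show ?thesis by simp
  qed
  define hG where "hG = (\<lambda>s. \<Sum>T\<in>Pow J. p s T * ((if u \<in> T \<and> v \<notin> T then R s T v else 0) + (if v \<in> T \<and> u \<notin> T then R s T u else 0)))"
  have G_int: "(hG has_integral gA J p x u v) {0..x}" if x: "x \<in> {0..1}" for x
  proof -
    let ?\<phi> = "\<lambda>S. if u \<in> S \<and> v \<in> S then 1 else 0"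
    have "((\<lambda>s. \<Sum>T\<in>Pow J. p s T * (\<Sum>w'\<in>J - T. R s T w' * (?\<phi> (insert w' T) - ?\<phi> T)))
          has_integral ((\<Sum>S\<in>Pow J. ?\<phi> S * p x S) - (\<Sum>S\<in>Pow J. ?\<phi> S * p 0 S))) {0..x}"
      by (rule agg_law[OF law finJ x])
    moreover have "(\<lambda>s. \<Sum>T\<in>Pow J. p s T * (\<Sum>w'\<in>J - T. R s T w' * (?\<phi> (insert w' T) - ?\<phi> T))) = hG"
      unfolding hG_def
    proof (intro ext sum.cong refl)
      fix s T assume "T \<in> Pow J"
      then show "p s T * (\<Sum>w'\<in>J - T. R s T w' * (?\<phi> (insert w' T) - ?\<phi> T))
          = p s T * ((if u \<in> T \<and> v \<notin> T then R s T v else 0) + (if v \<in> T \<and> u \<notin> T then R s T u else 0))"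
        using inner_G[OF finJ _ u v uv, of T "R s T"] by simp
    qed
    moreover have "(\<Sum>S\<in>Pow J. ?\<phi> S * p x S) = gA J p x u v"
      by (simp add: ind_sum gA_if[OF finJ])
    moreover have "(\<Sum>S\<in>Pow J. ?\<phi> S * p 0 S) = 0"
      unfolding p0sum by (rule init_sum[OF finJ]) simp
    ultimately show ?thesis by simp
  qed
  have f_le: "fA J p z w \<le> F z" if w: "w \<in> J" and z: "z \<in> {0..1}" for w z
  proof -
    have "0 \<le> F z - fA J p z w"
    proof (rule cmp_lemma[where D="\<lambda>s. F s - fA J p s w" and h="\<lambda>s. hF s - hf w s"])
      have fw0: "fA J p 0 w = 0"
      proof -
        have "(hf w has_integral fA J p 0 w) {0}" using f_int[OF w, of 0] by simp
        moreover have "(hf w has_integral 0) {0}" by (rule has_integral_refl(2))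
        ultimately show ?thesis by (rule has_integral_unique)
      qed
      show "((\<lambda>s. hF s - hf w s) has_integral (F y - fA J p y w) - (F 0 - fA J p 0 w)) {0..y}"
        if y: "y \<in> {0..1}" for y
        using has_integral_diff[OF F_int[OF y] f_int[OF w y]] F0 fw0 by simp
      show "0 \<le> F 0 - fA J p 0 w" using F0 fw0 by simp
      fix s :: real assume s: "s \<in> {0..1}" and neg: "F s - fA J p s w < 0"
      have gnn: "gbar s \<ge> 0" using H_facts(3)[OF H_law s] by (simp add: gbar_def gH_def)
      have "hf w s \<le> (1 - ln 2) * (1 - fA J p s w) + ln 2 * (if s > t0 then gbar s else 0)"
      proof -
        have pn: "\<And>T. T \<subseteq> J \<Longrightarrow> p s T \<ge> 0" using AUX_nonneg s by auto
        have "(\<Sum>T\<in>Pow J. p s T * (if w \<notin> T then aux_rate I J N lam lab t0 gbar p s T w else 0))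
            \<le> (1 - ln 2) * (1 - fA J p s w) + ln 2 * (if s > t0 then gbar s else 0)"
          by (rule flux_f_le[where p=p and s=s and gbar=gbar, OF finI finJ lam_pos x_sum classes lab_first lab_sum w pn totp[OF s] gnn])
        then show ?thesis by (simp only: hf_def R_def)
      qed
      moreover have "hF s = (1 - ln 2) * (1 - F s) + ln 2 * (if s > t0 then gbar s else 0)"
      proof -
        have a: "q s {} = 1 - q s {True} - q s {False} - q s UNIV" using H_facts(1)[OF H_law s] by linarith
        show ?thesis unfolding hF_def F_def gbar_def gH_def \<rho>_def r_def a
          by (rule hid)
      qed
      moreover have "(1 - ln 2) * (fA J p s w - F s) \<ge> 0" using neg l2 by simp
      ultimately show "0 \<le> hF s - hf w s" by (simp add: algebra_simps)
    qed (rule z)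
    then show ?thesis by simp
  qed
  have "0 \<le> q t UNIV - gA J p t u v"
  proof (rule cmp_lemma[where D="\<lambda>s. q s UNIV - gA J p s u v" and h="\<lambda>s. (r s * q s {True} + r s * q s {False}) - hG s"])
    have g0: "gA J p 0 u v = 0"
    proof -
      have "(hG has_integral gA J p 0 u v) {0}" using G_int[of 0] by simp
      moreover have "(hG has_integral 0) {0}" by (rule has_integral_refl(2))
      ultimately show ?thesis by (rule has_integral_unique)
    qed
    show "((\<lambda>s. (r s * q s {True} + r s * q s {False}) - hG s) has_integral (q y UNIV - gA J p y u v) - (q 0 UNIV - gA J p 0 u v)) {0..y}"
      if y: "y \<in> {0..1}" for y
      using has_integral_diff[OF raw4[OF y] G_int[OF y]] q0 g0 by simp
    show "0 \<le> q 0 UNIV - gA J p 0 u v" using q0 g0 by simp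
    fix s :: real assume s: "s \<in> {0..1}" and neg: "q s UNIV - gA J p s u v < 0"
    have pnn: "\<And>T. T \<in> Pow J \<Longrightarrow> p s T \<ge> 0" using AUX_nonneg s by auto
    have Rle: "\<And>T w. w \<in> J \<Longrightarrow> R s T w \<le> r s"
      unfolding R_def r_def by (rule rate_le[OF finI lam_pos x_sum classes lab_first lab_sum])
    have "hG s \<le> (\<Sum>T\<in>Pow J. p s T * ((if u \<in> T \<and> v \<notin> T then r s else 0) + (if v \<in> T \<and> u \<notin> T then r s else 0)))"
      unfolding hG_def
      by (rule sum_mono, rule mult_left_mono) (auto intro!: add_mono Rle u v pnn)
    also have "\<dots> = r s * (fA J p s u + fA J p s v - 2 * gA J p s u v)"
    proof -
      have "fA J p s u + fA J p s v - 2 * gA J p s u v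
          = (\<Sum>T\<in>Pow J. (if u \<in> T then p s T else 0) + (if v \<in> T then p s T else 0) - 2 * (if u \<in> T \<and> v \<in> T then p s T else 0))"
        by (simp add: fA_if[OF finJ] gA_if[OF finJ] sum.distrib sum_subtractf sum_distrib_left)
      then show ?thesis
        by (simp add: sum_distrib_left) (rule sum.cong, auto simp: algebra_simps)
    qed
    also have "\<dots> \<le> r s * (q s {True} + q s {False})"
    proof (rule mult_left_mono[OF _ rp])
      have "fA J p s u \<le> F s" "fA J p s v \<le> F s" using f_le u v s by auto
      then show "fA J p s u + fA J p s v - 2 * gA J p s u v \<le> q s {True} + q s {False}"
        using neg unfolding F_def by argo
    qed
    finally show "0 \<le> (r s * q s {True} + r s * q s {False}) - hG s" by (simp add: algebra_simps)
  qed (rule t)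
  then show "gA J p t u v \<le> gH q t" by (simp add: gH_def)
qed


end
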